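(* The map $R$ is Lebesgue measurable. Every fiber $R^{-1}(y)$, $y\in[0,1]$, is non-empty and has a maximum element $S(y)$, and $S([0,1])\subset[0,1]\setminus\mathscr N$; in particular $S([0,1])$ has Lebesgue measure zero, and $R\circ S=\mathrm{id}_{[0,1]}$. Consequently $R$ is not bi-measurable: there exists a Lebesgue-null set $E\subset[0,1]$ such that $R(E)$ is not Lebesgue measurable.
   Context: Define $\rho$ on binary words: for $b=b_1b_2\dots$, $\rho(b)$ is obtained by deleting every digit $b_n=0$ and replacing every $b_n=1$ by $0$ if $n$ is odd and by $1$ if $n$ is even. For $x\in(0,1]$ let $\beta(x)$ be the unique binary expansion of $x$ with infinitely many $1$'s. Define $R:[0,1]\to[0,1]$ by $R(0)=2/3$ and, for $x\in(0,1]$, $R(x)=\sum_{n\ge1}c_n2^{-n}$ where $c=\rho(\beta(x))$. $\mathscr N\subset[0,1]$ denotes the set of numbers normal in base $2$ (every binary word of length $k$ occurs in the binary expansion with asymptotic frequency $2^{-k}$, for every $k\ge1$). *)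

theory Defs
  imports "HOL-Analysis.Analysis" "HOL-Library.Infinite_Set"
begin

text \<open>Binary words are infinite sequences \<open>nat \<Rightarrow> bool\<close>, indexed from 0:
  position i here corresponds to the paper's digit b_(i+1).\<close>

definition bin_val :: "(nat \<Rightarrow> bool) \<Rightarrow> real" where
  "bin_val b = (\<Sum>n. (if b n then 1 else 0) / 2 ^ (Suc n))"

definition beta :: "real \<Rightarrow> (nat \<Rightarrow> bool)" where
  "beta x = (THE b. bin_val b = x \<and> infinite {n. b n})"

text \<open>rho on words with infinitely many 1's: delete the 0 digits and replace
  the 1 at (paper) position n by 0 if n is odd and by 1 if n is even.
  The k-th surviving digit (0-indexed) comes from the k-th 1, at 0-indexed
  position p = enumerate {n. b n} k, i.e. paper position p+1; it becomes 1
  iff p+1 is even iff p is odd.\<close>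
definition rho :: "(nat \<Rightarrow> bool) \<Rightarrow> (nat \<Rightarrow> bool)" where
  "rho b = (\<lambda>k. odd (enumerate {n. b n} k))"

definition R :: "real \<Rightarrow> real" where
  "R x = (if x = 0 then 2/3 else bin_val (rho (beta x)))"

definition digits :: "real \<Rightarrow> (nat \<Rightarrow> bool)" where
  "digits x = (if x = 0 then (\<lambda>_. False) else beta x)"

definition normal2 :: "real set" where
  "normal2 = {x \<in> {0..1}. \<forall>k\<ge>1. \<forall>w::bool list. length w = k \<longrightarrow>
      ((\<lambda>N. real (card {i. i < N \<and> (\<forall>j<k. digits x (i + j) = w ! j)}) / real N)
        \<longlonglongrightarrow> 1 / 2 ^ k)}"

definition S :: "real \<Rightarrow> real" where
  "S y = (GREATEST x. x \<in> {0..1} \<and> R x = y)"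

end

theory Submission
  imports Defs
begin


definition bterm :: "(nat \<Rightarrow> bool) \<Rightarrow> nat \<Rightarrow> real" where
  "bterm b n = (if b n then 1 else 0) / 2 ^ (Suc n)"

lemma bterm_nonneg: "0 \<le> bterm b n"
  by (simp add: bterm_def)

lemma bterm_le: "bterm b n \<le> (1/2) ^ Suc n"
  by (simp add: bterm_def power_divide)

lemma summable_geo2: "summable (\<lambda>n. (1/2::real) ^ Suc n)"
  by (simp add: summable_geometric)

lemma suminf_geo2: "(\<Sum>n. (1/2::real) ^ Suc n) = 1"
proof -
  have "(\<lambda>n. (1/2::real) ^ Suc n) = (\<lambda>n. (1/2) * (1/2) ^ n)" by simp
  moreover have "(\<Sum>n. (1/2::real) * (1/2) ^ n) = (1/2) * (\<Sum>n. (1/2) ^ n)"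
    by (rule suminf_mult) (simp add: summable_geometric)
  moreover have "(\<Sum>n. (1/2::real) ^ n) = 2" using suminf_geometric[of "1/2::real"] by simp
  ultimately show ?thesis by simp
qed

lemma summable_bterm: "summable (bterm b)"
  by (rule summable_comparison_test'[OF summable_geo2, where N=0]) (metis bterm_le bterm_nonneg real_norm_def abs_of_nonneg)

lemma bin_val_eq: "bin_val b = suminf (bterm b)"
  by (simp add: bin_val_def bterm_def[abs_def])

lemma bin_val_nonneg: "0 \<le> bin_val b"
  unfolding bin_val_eq by (rule suminf_nonneg[OF summable_bterm bterm_nonneg])

lemma bin_val_le1: "bin_val b \<le> 1"
  unfolding bin_val_eq using suminf_le[OF bterm_le summable_bterm summable_geo2] suminf_geo2 by simp

lemma bin_val_pos: "b j \<Longrightarrow> 0 < bin_val b"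
  unfolding bin_val_eq by (rule suminf_pos2[OF summable_bterm bterm_nonneg, where i=j]) (simp add: bterm_def)

lemma bin_val_compl: "bin_val b + bin_val (\<lambda>n. \<not> b n) = 1"
proof -
  have "bin_val b + bin_val (\<lambda>n. \<not> b n) = (\<Sum>n. bterm b n + bterm (\<lambda>n. \<not> b n) n)"
    unfolding bin_val_eq by (rule suminf_add[OF summable_bterm summable_bterm])
  also have "(\<lambda>n. bterm b n + bterm (\<lambda>n. \<not> b n) n) = (\<lambda>n. (1/2::real) ^ Suc n)"
    by (auto simp: bterm_def power_divide)
  finally show ?thesis using suminf_geo2 by simp
qed

lemma bin_val_lt1: "\<not> b j \<Longrightarrow> bin_val b < 1"
  using bin_val_compl[of b] bin_val_pos[of "\<lambda>n. \<not> b n" j] by simp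

lemma bin_val_shift: "bin_val b = (if b 0 then 1/2 else 0) + bin_val (\<lambda>n. b (Suc n)) / 2"
proof -
  have "bin_val (\<lambda>n. b (Suc n)) = (\<Sum>n. 2 * bterm b (Suc n))"
    unfolding bin_val_eq by (rule arg_cong[where f=suminf]) (auto simp: bterm_def)
  also have "\<dots> = 2 * (\<Sum>n. bterm b (Suc n))"
    by (rule suminf_mult) (simp add: summable_bterm summable_Suc_iff)
  also have "(\<Sum>n. bterm b (Suc n)) = bin_val b - bterm b 0"
    unfolding bin_val_eq by (rule suminf_split_head[OF summable_bterm])
  finally have E: "bin_val (\<lambda>n. b (Suc n)) = 2 * (bin_val b - bterm b 0)" .
  have "bin_val b = bterm b 0 + bin_val (\<lambda>n. b (Suc n)) / 2"
    unfolding E by (simp add: field_simps)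
  then show ?thesis by (simp add: bterm_def)
qed

lemma bin_val_less:
  assumes "b n" "\<not> b' n" "\<forall>i<n. b i = b' i" "(\<exists>j>n. b j) \<or> (\<exists>j>n. \<not> b' j)"
  shows "bin_val b' < bin_val b"
  using assms
proof (induction n arbitrary: b b')
  case 0
  let ?t = "\<lambda>n. b (Suc n)" and ?t' = "\<lambda>n. b' (Suc n)"
  have "bin_val b = 1/2 + bin_val ?t / 2" "bin_val b' = bin_val ?t' / 2"
    using 0 bin_val_shift[of b] bin_val_shift[of b'] by auto
  moreover have "0 < bin_val ?t \<or> bin_val ?t' < 1"
  proof (cases "\<exists>j>0. b j")
    case True then obtain j where "j > 0" "b j" by auto
    then show ?thesis using bin_val_pos[of ?t "j - 1"] by simp
  next
    case False then obtain j where "j > 0" "\<not> b' j" using "0.prems"(4) by blast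
    then show ?thesis using bin_val_lt1[of ?t' "j - 1"] by simp
  qed
  moreover have "0 \<le> bin_val ?t" "bin_val ?t' \<le> 1" by (rule bin_val_nonneg, rule bin_val_le1)
  ultimately show ?case by linarith
next
  case (Suc n)
  let ?t = "\<lambda>n. b (Suc n)" and ?t' = "\<lambda>n. b' (Suc n)"
  have "bin_val ?t' < bin_val ?t"
  proof (rule Suc.IH)
    from Suc.prems(4) show "(\<exists>j>n. ?t j) \<or> (\<exists>j>n. \<not> ?t' j)"
    proof (elim disjE exE conjE)
      fix j assume "Suc n < j" "b j"
      then show ?thesis by (intro disjI1 exI[of _ "j - 1"]) simp
    next
      fix j assume "Suc n < j" "\<not> b' j"
      then show ?thesis by (intro disjI2 exI[of _ "j - 1"]) simp
    qed
    show "?t n" using Suc.prems(1) by simp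
    show "\<not> ?t' n" using Suc.prems(2) by simp
    show "\<forall>i<n. ?t i = ?t' i" using Suc.prems(3) by simp
  qed
  moreover have "b 0 = b' 0" using Suc.prems by auto
  ultimately show ?case using bin_val_shift[of b] bin_val_shift[of b'] by auto
qed

lemma first_diff:
  assumes "b \<noteq> (b' :: nat \<Rightarrow> bool)"
  obtains n where "b n \<noteq> b' n" "\<forall>i<n. b i = b' i"
proof -
  obtain m where "b m \<noteq> b' m" using assms by auto
  let ?n = "LEAST n. b n \<noteq> b' n"
  have "b ?n \<noteq> b' ?n" by (rule LeastI[of _ m]) fact
  moreover have "\<forall>i<?n. b i = b' i" using not_less_Least by blast
  ultimately show ?thesis using that by blast
qed

lemma bin_val_inj_inf:
  assumes "infinite {n. b n}" "infinite {n. b' n}" "bin_val b = bin_val b'"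
  shows "b = b'"
proof (rule ccontr)
  assume "b \<noteq> b'"
  then obtain n where n: "b n \<noteq> b' n" "\<forall>i<n. b i = b' i" by (rule first_diff)
  have ex: "\<exists>j>n. c j" if "infinite {n. c n}" for c :: "nat \<Rightarrow> bool"
    using that unfolding infinite_nat_iff_unbounded by auto
  show False
  proof (cases "b n")
    case True
    have "bin_val b' < bin_val b"
      by (rule bin_val_less[of b n b']) (use True n ex[OF assms(1)] in simp_all)
    then show False using assms by simp
  next
    case False
    have "bin_val b < bin_val b'"
      by (rule bin_val_less[of b' n b]) (use False n ex[OF assms(2)] in simp_all)
    then show False using assms by simp
  qed
qed

lemma bin_val_inj_fin:
  assumes "finite {n. b n}" "finite {n. b' n}" "bin_val b = bin_val b'"
  shows "b = b'"
proof (rule ccontr)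
  assume "b \<noteq> b'"
  then obtain n where n: "b n \<noteq> b' n" "\<forall>i<n. b i = b' i" by (rule first_diff)
  have ex: "\<exists>j>n. \<not> c j" if fin: "finite {n. c n}" for c :: "nat \<Rightarrow> bool"
  proof -
    obtain M where "\<forall>x\<in>{n. c n}. x \<le> M" using fin unfolding finite_nat_set_iff_bounded_le by blast
    then show ?thesis by (intro exI[of _ "Suc (max n M)"]) auto
  qed
  show False
  proof (cases "b n")
    case True
    have "bin_val b' < bin_val b"
      by (rule bin_val_less[of b n b']) (use True n ex[OF assms(2)] in simp_all)
    then show False using assms by simp
  next
    case False
    have "bin_val b < bin_val b'"
      by (rule bin_val_less[of b' n b]) (use False n ex[OF assms(1)] in simp_all)
    then show False using assms by simp
  qed
qed

lemma finite_expansions: "finite {c. bin_val c = y}"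
proof -
  have sub: "finite A" if "\<forall>a\<in>A. \<forall>b\<in>A. a = b" for A :: "(nat \<Rightarrow> bool) set"
  proof (cases "A = {}")
    case False then obtain a where "a \<in> A" by auto
    then have "A \<subseteq> {a}" using that by auto
    then show ?thesis using finite_subset by blast
  qed simp
  have "{c. bin_val c = y} = {c. bin_val c = y \<and> infinite {n. c n}} \<union> {c. bin_val c = y \<and> finite {n. c n}}"
    by auto
  moreover have "finite {c. bin_val c = y \<and> infinite {n. c n}}"
    apply (rule sub) apply clarify apply (rule bin_val_inj_inf) apply assumption+ apply simp done
  moreover have "finite {c. bin_val c = y \<and> finite {n. c n}}"
    apply (rule sub) apply clarify apply (rule bin_val_inj_fin) apply assumption+ apply simp done
  ultimately show ?thesis by (simp only: finite_Un)
qed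



definition pos_word :: "(nat \<Rightarrow> nat) \<Rightarrow> nat \<Rightarrow> bool" where
  "pos_word p = (\<lambda>n. n \<in> range p)"

fun gp :: "(nat \<Rightarrow> bool) \<Rightarrow> nat \<Rightarrow> nat" where
  "gp c 0 = (if c 0 then 1 else 0)"
| "gp c (Suc k) = (if odd (Suc (gp c k)) = c (Suc k) then Suc (gp c k) else Suc (Suc (gp c k)))"

lemma gp_step: "gp c k < gp c (Suc k)" "gp c (Suc k) \<le> gp c k + 2"
  by auto

lemma strict_mono_gp: "strict_mono (gp c)"
  by (rule strict_monoI_Suc) (rule gp_step)

lemma gp_odd: "odd (gp c k) = c k"
  by (induction k) auto

lemma enumerate_range:
  assumes sm: "strict_mono (p :: nat \<Rightarrow> nat)"
  shows "enumerate (range p) k = p k"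
proof -
  have inf: "infinite (range p)"
    using range_inj_infinite[OF strict_mono_imp_inj_on[OF sm]] .
  show ?thesis
  proof (induction k)
    case 0
    show ?case unfolding enumerate_0
    proof (rule Least_equality)
      show "p 0 \<in> range p" by (rule rangeI)
      fix y assume "y \<in> range p"
      then obtain j where "y = p j" by blast
      then show "p 0 \<le> y" using strict_mono_less_eq[OF sm, of 0 j] by simp
    qed
  next
    case (Suc k)
    show ?case unfolding enumerate_Suc''[OF inf] Suc
    proof (rule Least_equality)
      show "p (Suc k) \<in> range p \<and> p k < p (Suc k)"
        using strict_mono_less[OF sm, of k "Suc k"] by simp
      fix y assume "y \<in> range p \<and> p k < y"
      then obtain j where "y = p j" "p k < p j" by blast
      then show "p (Suc k) \<le> y" using strict_mono_less[OF sm, of k j] strict_mono_less_eq[OF sm, of "Suc k" j]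
        by simp
    qed
  qed
qed

lemma range_pos_word: "{n. pos_word p n} = range p"
  unfolding pos_word_def by simp

lemma infinite_pos_word: "strict_mono p \<Longrightarrow> infinite {n. pos_word p n}"
  unfolding range_pos_word using range_inj_infinite[OF strict_mono_imp_inj_on] .

lemma rho_pos_word: "strict_mono p \<Longrightarrow> rho (pos_word p) = (\<lambda>k. odd (p k))"
  unfolding rho_def range_pos_word by (simp only: enumerate_range)

lemma rho_gp: "rho (pos_word (gp c)) = c"
  unfolding rho_pos_word[OF strict_mono_gp] gp_odd ..

lemma pos_word_enum: "infinite {n. b n} \<Longrightarrow> pos_word (enumerate {n. b n}) = b"
  unfolding pos_word_def by (simp add: range_enumerate)

lemma bin_val_pos_word:
  assumes "strict_mono p"
  shows "(\<lambda>k. (1/2::real) ^ Suc (p k)) sums bin_val (pos_word p)"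
proof -
  have "bterm (pos_word p) sums bin_val (pos_word p)"
    unfolding bin_val_eq using summable_bterm by (rule summable_sums)
  then have "(\<lambda>k. bterm (pos_word p) (p k)) sums bin_val (pos_word p)"
    by (subst sums_mono_reindex[OF assms]) (auto simp: bterm_def pos_word_def)
  moreover have "(\<lambda>k. bterm (pos_word p) (p k)) = (\<lambda>k. (1/2::real) ^ Suc (p k))"
    by (auto simp: bterm_def pos_word_def power_divide)
  ultimately show ?thesis by simp
qed

lemma gp_le_enum:
  assumes inf: "infinite {n. b n}"
  shows "gp (rho b) k \<le> enumerate {n. b n} k"
proof (induction k)
  case 0
  then show ?case using odd_pos by (auto simp: rho_def Suc_le_eq)
next
  case (Suc k)
  let ?q = "enumerate {n. b n}"
  have lt: "?q k < ?q (Suc k)" using enumerate_step[OF inf] .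
  show ?case
  proof (cases "odd (Suc (gp (rho b) k)) = rho b (Suc k)")
    case True then show ?thesis using Suc lt by simp
  next
    case False
    then have "?q (Suc k) \<noteq> Suc (gp (rho b) k)" by (auto simp: rho_def)
    then show ?thesis using Suc lt False by simp
  qed
qed

lemma bin_val_le_gp:
  assumes inf: "infinite {n. b n}"
  shows "bin_val b \<le> bin_val (pos_word (gp (rho b)))"
proof -
  let ?q = "enumerate {n. b n}"
  have s1: "(\<lambda>k. (1/2::real) ^ Suc (?q k)) sums bin_val b"
    using bin_val_pos_word[OF strict_mono_enumerate[OF inf]] pos_word_enum[OF inf] by simp
  have s2: "(\<lambda>k. (1/2::real) ^ Suc (gp (rho b) k)) sums bin_val (pos_word (gp (rho b)))"
    by (rule bin_val_pos_word[OF strict_mono_gp])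
  have le: "(1/2::real) ^ Suc (?q k) \<le> (1/2) ^ Suc (gp (rho b) k)" for k
    by (rule power_decreasing) (use gp_le_enum[OF inf, of k] in auto)
  show ?thesis by (rule sums_le[OF le s1 s2])
qed

lemma gp_no00: "pos_word (gp c) i \<or> pos_word (gp c) (Suc i)"
proof -
  have "\<exists>k. gp c k = i \<or> gp c k = Suc i"
  proof (induction i)
    case 0 show ?case by (intro exI[of _ 0]) simp
  next
    case (Suc i)
    then obtain k where k: "gp c k = i \<or> gp c k = Suc i" by blast
    show ?case
    proof (cases "gp c k = i")
      case True
      have "gp c (Suc k) = Suc i \<or> gp c (Suc k) = Suc (Suc i)"
        using gp_step[of c k] True by linarith
      then show ?thesis by blast
    next
      case False
      then have "gp c k = Suc i" using k by blast
      then show ?thesis by blast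
    qed
  qed
  then obtain k where "gp c k = i \<or> gp c k = Suc i" by blast
  then show ?thesis unfolding pos_word_def by (metis rangeI)
qed



definition dig :: "real \<Rightarrow> nat \<Rightarrow> bool" where
  "dig x n = odd (\<lceil>2 ^ Suc n * x\<rceil> - 1)"

lemma beta_eq:
  assumes "infinite {n. b n}"
  shows "beta (bin_val b) = b"
  unfolding beta_def
proof (rule the_equality)
  show "bin_val b = bin_val b \<and> infinite {n. b n}" using assms by simp
  fix b' assume "bin_val b' = bin_val b \<and> infinite {n. b' n}"
  then show "b' = b" using bin_val_inj_inf[of b' b] assms by blast
qed

context
  fixes x :: real
  assumes x: "0 < x" "x \<le> 1"
begin

definition kk :: "nat \<Rightarrow> int" where "kk n = \<lceil>2 ^ n * x\<rceil> - 1"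

lemma kk_bounds: "real_of_int (kk n) < 2 ^ n * x" "2 ^ n * x \<le> real_of_int (kk n) + 1"
  using ceiling_correct[of "2 ^ n * x"] unfolding kk_def by auto

lemma kk_0: "kk 0 = 0"
  using x unfolding kk_def by (simp add: ceiling_eq_iff)

lemma kk_Suc: "kk (Suc n) = 2 * kk n + (if dig x n then 1 else 0)"
proof -
  have a: "real_of_int (kk (Suc n)) < 2 * (2 ^ n * x)" "2 * (2 ^ n * x) \<le> real_of_int (kk (Suc n)) + 1"
    using kk_bounds[of "Suc n"] by simp_all
  have b: "real_of_int (kk n) < 2 ^ n * x" "2 ^ n * x \<le> real_of_int (kk n) + 1"
    using kk_bounds[of n] by simp_all
  have "2 * kk n \<le> kk (Suc n)" "kk (Suc n) \<le> 2 * kk n + 1"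
  proof -
    have "real_of_int (2 * kk n) < real_of_int (kk (Suc n)) + 1" using a b by simp
    then show "2 * kk n \<le> kk (Suc n)" by linarith
    have "real_of_int (kk (Suc n)) < real_of_int (2 * kk n + 2)" using a b by simp
    then show "kk (Suc n) \<le> 2 * kk n + 1" by linarith
  qed
  moreover have "dig x n = odd (kk (Suc n))" by (simp add: dig_def kk_def)
  ultimately show ?thesis by (cases "kk (Suc n) = 2 * kk n") auto
qed

lemma partial_dig: "(\<Sum>i<n. bterm (dig x) i) = real_of_int (kk n) / 2 ^ n"
proof (induction n)
  case 0 show ?case by (simp add: kk_0)
next
  case (Suc n)
  have "(\<Sum>i<Suc n. bterm (dig x) i) = real_of_int (kk n) / 2 ^ n + bterm (dig x) n"
    using Suc by simp
  also have "\<dots> = real_of_int (kk (Suc n)) / 2 ^ Suc n"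
    unfolding kk_Suc by (simp add: bterm_def field_simps)
  finally show ?case .
qed

lemma kk_lim: "(\<lambda>n. real_of_int (kk n) / 2 ^ n) \<longlonglongrightarrow> x"
proof (rule tendsto_sandwich[of "\<lambda>n. x - (1/2)^n" _ _ "\<lambda>n. x"])
  show "\<forall>\<^sub>F n in sequentially. x - (1/2)^n \<le> real_of_int (kk n) / 2 ^ n"
  proof (intro always_eventually allI)
    fix n
    have "2 ^ n * x \<le> real_of_int (kk n) + 1" by (rule kk_bounds)
    then have "x \<le> (real_of_int (kk n) + 1) / 2 ^ n" by (simp add: field_simps)
    also have "\<dots> = real_of_int (kk n) / 2 ^ n + (1/2)^n" by (simp add: add_divide_distrib power_divide)
    finally show "x - (1/2)^n \<le> real_of_int (kk n) / 2 ^ n" by linarith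
  qed
  show "\<forall>\<^sub>F n in sequentially. real_of_int (kk n) / 2 ^ n \<le> x"
  proof (intro always_eventually allI)
    fix n
    have "real_of_int (kk n) < 2 ^ n * x" by (rule kk_bounds)
    then show "real_of_int (kk n) / 2 ^ n \<le> x" by (simp add: field_simps)
  qed
  have "(\<lambda>n. (1/2::real)^n) \<longlonglongrightarrow> 0" by (rule LIMSEQ_power_zero) simp
  then show "(\<lambda>n. x - (1/2)^n) \<longlonglongrightarrow> x" using tendsto_diff[of "\<lambda>_. x" x sequentially] by force
qed simp

lemma bin_val_dig: "bin_val (dig x) = x"
proof -
  have "bterm (dig x) sums x"
    unfolding sums_def partial_dig by (rule kk_lim)
  then show ?thesis unfolding bin_val_eq by (rule sums_unique[symmetric])
qed

lemma infinite_dig: "infinite {n. dig x n}"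
proof
  assume "finite {n. dig x n}"
  then obtain N where N: "\<forall>n\<in>{n. dig x n}. n < N" using finite_nat_set_iff_bounded by blast
  have eq: "real_of_int (kk (N + m)) / 2 ^ (N + m) = real_of_int (kk N) / 2 ^ N" for m
  proof (induction m)
    case (Suc m)
    have "\<not> dig x (N + m)" using N by auto
    then have "kk (Suc (N + m)) = 2 * kk (N + m)" by (simp add: kk_Suc)
    then show ?case using Suc by (simp add: field_simps)
  qed simp
  have "(\<lambda>m. real_of_int (kk (m + N)) / 2 ^ (m + N)) \<longlonglongrightarrow> x"
    using LIMSEQ_ignore_initial_segment[OF kk_lim, of N] .
  moreover have "(\<lambda>m. real_of_int (kk (m + N)) / 2 ^ (m + N)) = (\<lambda>m. real_of_int (kk N) / 2 ^ N)"
    using eq by (simp add: add.commute)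
  ultimately have "real_of_int (kk N) / 2 ^ N = x" using LIMSEQ_const_iff by metis
  moreover have "real_of_int (kk N) < 2 ^ N * x" by (rule kk_bounds)
  ultimately show False by (simp add: field_simps)
qed

lemma beta_dig: "beta x = dig x"
  using beta_eq[OF infinite_dig] bin_val_dig by simp

lemma beta_props: "bin_val (beta x) = x" "infinite {n. beta x n}"
  using beta_dig bin_val_dig infinite_dig by simp_all

end



definition Gval :: "(nat \<Rightarrow> bool) \<Rightarrow> real" where
  "Gval c = bin_val (pos_word (gp c))"

lemma Gval_pos: "0 < Gval c"
  unfolding Gval_def by (rule bin_val_pos[of _ "gp c 0"]) (unfold pos_word_def, rule rangeI)

lemma Gval_le1: "Gval c \<le> 1"
  unfolding Gval_def by (rule bin_val_le1)

lemma beta_Gval: "beta (Gval c) = pos_word (gp c)"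
  unfolding Gval_def by (rule beta_eq[OF infinite_pos_word[OF strict_mono_gp]])

lemma R_Gval: "R (Gval c) = bin_val c"
  using Gval_pos[of c] unfolding R_def by (simp add: beta_Gval rho_gp)

lemma R_pos: "0 < x \<Longrightarrow> R x = bin_val (rho (beta x))"
  by (simp add: R_def)

lemma le_Gval: "0 < x \<Longrightarrow> x \<le> 1 \<Longrightarrow> x \<le> Gval (rho (beta x))"
  using bin_val_le_gp[OF beta_props(2)] beta_props(1) unfolding Gval_def by metis

lemma bin_val_zero: "bin_val (\<lambda>_. False) = 0"
  by (simp add: bin_val_def)

lemma fiber_max:
  assumes y: "0 \<le> y" "y \<le> 1"
  shows "\<exists>c. bin_val c = y \<and> Gval c \<in> {x \<in> {0..1}. R x = y} \<and> (\<forall>x \<in> {x \<in> {0..1}. R x = y}. x \<le> Gval c)"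
proof -
  let ?C = "{c. bin_val c = y}"
  have ne: "?C \<noteq> {}"
  proof (cases "y = 0")
    case True then show ?thesis using bin_val_zero by blast
  next
    case False then have "bin_val (beta y) = y" using y beta_props(1)[of y] by simp
    then show ?thesis by blast
  qed
  let ?G = "Gval ` ?C"
  have fin: "finite ?G" using finite_expansions by blast
  have neG: "?G \<noteq> {}" using ne by blast
  have "Max ?G \<in> ?G" using Max_in[OF fin neG] .
  then obtain c where c: "bin_val c = y" "Max ?G = Gval c" by blast
  show ?thesis
  proof (intro exI[of _ c] conjI ballI)
    show "bin_val c = y" by (rule c)
    show "Gval c \<in> {x \<in> {0..1}. R x = y}"
      using Gval_pos[of c] Gval_le1[of c] R_Gval[of c] c by simp
    fix x assume xf: "x \<in> {x \<in> {0..1}. R x = y}"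
    show "x \<le> Gval c"
    proof (cases "x = 0")
      case True then show ?thesis using Gval_pos[of c] by simp
    next
      case False
      then have x01: "0 < x" "x \<le> 1" using xf by auto
      then have "rho (beta x) \<in> ?C" using xf R_pos[of x] by simp
      then have "Gval (rho (beta x)) \<le> Max ?G" using Max_ge[OF fin] by blast
      then show ?thesis using le_Gval[OF x01] c by simp
    qed
  qed
qed

lemma S_props:
  assumes y: "0 \<le> y" "y \<le> 1"
  shows "\<exists>c. S y = Gval c \<and> S y \<in> {x \<in> {0..1}. R x = y} \<and> (\<forall>x \<in> {x \<in> {0..1}. R x = y}. x \<le> S y)"
proof -
  obtain c where c: "Gval c \<in> {x \<in> {0..1}. R x = y}" "\<forall>x \<in> {x \<in> {0..1}. R x = y}. x \<le> Gval c"
    using fiber_max[OF y] by blast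
  have "S y = Gval c"
    unfolding S_def by (rule Greatest_equality) (use c in auto)
  then show ?thesis using c by auto
qed

lemma Gval_not_normal: "Gval c \<notin> normal2"
proof
  assume "Gval c \<in> normal2"
  then have "((\<lambda>N. real (card {i. i < N \<and> (\<forall>j<2. digits (Gval c) (i + j) = [False, False] ! j)}) / real N)
        \<longlonglongrightarrow> 1 / 2 ^ 2)"
    unfolding normal2_def by (auto dest!: spec[of _ 2])
  moreover have "digits (Gval c) = pos_word (gp c)"
    using Gval_pos[of c] by (simp add: digits_def beta_Gval)
  moreover have "{i. i < N \<and> (\<forall>j<2. pos_word (gp c) (i + j) = [False, False] ! j)} = {}" for N
  proof -
    have "\<not> (\<forall>j<2. pos_word (gp c) (i + j) = [False, False] ! j)" for i
    proof
      assume H: "\<forall>j<2. pos_word (gp c) (i + j) = [False, False] ! j"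
      have "\<not> pos_word (gp c) i" "\<not> pos_word (gp c) (Suc i)"
        using H[rule_format, of 0] H[rule_format, of 1] by simp_all
      then show False using gp_no00[of c i] by simp
    qed
    then show ?thesis by blast
  qed
  ultimately have "(\<lambda>N. 0::real) \<longlonglongrightarrow> 1 / 2 ^ 2" by simp
  then have "(0::real) = 1 / 2 ^ 2" using LIMSEQ_const_iff by blast
  then show False by simp
qed



definition Zset :: "real set" where
  "Zset = {bin_val b | b. \<forall>i. b i \<or> b (Suc i)}"

fun LL :: "nat \<Rightarrow> real set" where
  "LL 0 = {0}"
| "LL (Suc n) = (\<lambda>a. 1/4 + a/4) ` LL n \<union> (\<lambda>a. 1/2 + a/4) ` LL n \<union> (\<lambda>a. 3/4 + a/4) ` LL n"

lemma LL_finite: "finite (LL n)"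
  by (induction n) auto

lemma LL_card: "card (LL n) \<le> 3 ^ n"
proof (induction n)
  case (Suc n)
  let ?A = "(\<lambda>a. 1/4 + a/4) ` LL n" and ?B = "(\<lambda>a. 1/2 + a/4) ` LL n" and ?C = "(\<lambda>a. 3/4 + a/4) ` LL n"
  have "card (LL (Suc n)) \<le> card (?A \<union> ?B) + card ?C"
    by (simp only: LL.simps) (rule card_Un_le)
  also have "\<dots> \<le> card ?A + card ?B + card ?C"
    using card_Un_le[of ?A ?B] by simp
  also have "\<dots> \<le> card (LL n) + card (LL n) + card (LL n)"
    using card_image_le[OF LL_finite, of "\<lambda>a. 1/4 + a/4" n] card_image_le[OF LL_finite, of "\<lambda>a. 1/2 + a/4" n]
      card_image_le[OF LL_finite, of "\<lambda>a. 3/4 + a/4" n] by linarith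
  finally show ?case using Suc by simp
qed simp

definition Cov :: "nat \<Rightarrow> real set" where
  "Cov n = (\<Union>a\<in>LL n. {a..a + (1/4)^n})"

lemma Cov_lmeasurable: "Cov n \<in> lmeasurable"
  unfolding Cov_def by (rule fmeasurable.finite_UN[OF LL_finite]) (simp add: lmeasurable_cbox[of _ "_::real", simplified])

lemma measure_Icc_leb: "a \<le> b \<Longrightarrow> measure lebesgue {a..b::real} = b - a"
  by (subst measure_completion) auto

lemma Cov_measure: "measure lebesgue (Cov n) \<le> (3/4)^n"
proof -
  have "measure lebesgue (Cov n) \<le> (\<Sum>a\<in>LL n. measure lebesgue {a..a + (1/4)^n})"
    unfolding Cov_def by (rule measure_UNION_le[OF LL_finite]) simp
  also have "\<dots> = real (card (LL n)) * (1/4)^n"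
    by (simp add: measure_Icc_leb)
  also have "\<dots> \<le> 3 ^ n * (1/4)^n"
    by (rule mult_right_mono) (use LL_card[of n] in \<open>simp_all add: of_nat_le_iff[symmetric]\<close>)
  also have "\<dots> = (3/4)^n" by (simp add: power_divide)
  finally show ?thesis .
qed

lemma bin_val_shift2: "bin_val b = (if b 0 then 1/2 else 0) + (if b (Suc 0) then 1/4 else 0) + bin_val (\<lambda>i. b (Suc (Suc i))) / 4"
  using bin_val_shift[of b] bin_val_shift[of "\<lambda>i. b (Suc i)"] by simp

lemma in_Cov: "\<forall>i. b i \<or> b (Suc i) \<Longrightarrow> bin_val b \<in> Cov n"
proof (induction n arbitrary: b)
  case 0
  then show ?case unfolding Cov_def using bin_val_nonneg[of b] bin_val_le1[of b] by simp
next
  case (Suc n)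
  let ?t = "\<lambda>i. b (Suc (Suc i))"
  have "bin_val ?t \<in> Cov n" by (rule Suc.IH) (use Suc.prems in simp)
  then obtain a where a: "a \<in> LL n" "a \<le> bin_val ?t" "bin_val ?t \<le> a + (1/4)^n"
    unfolding Cov_def by auto
  have two: "b 0 \<or> b (Suc 0)" using Suc.prems by blast
  define d :: real where "d = (if b 0 then 1/2 else 0) + (if b (Suc 0) then 1/4 else 0)"
  have d: "d = 1/4 \<or> d = 1/2 \<or> d = 3/4" using two unfolding d_def by auto
  have bv: "bin_val b = d + bin_val ?t / 4" unfolding d_def by (rule bin_val_shift2)
  have mem: "d + a/4 \<in> LL (Suc n)"
    using d
  proof (elim disjE)
    assume h: "d = 1/4" show ?thesis unfolding h LL.simps using imageI[OF a(1), of "\<lambda>a. 1/4 + a/4"] by blast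
  next
    assume h: "d = 1/2" show ?thesis unfolding h LL.simps using imageI[OF a(1), of "\<lambda>a. 1/2 + a/4"] by blast
  next
    assume h: "d = 3/4" show ?thesis unfolding h LL.simps using imageI[OF a(1), of "\<lambda>a. 3/4 + a/4"] by blast
  qed
  have "d + a/4 \<le> bin_val b" "bin_val b \<le> d + a/4 + (1/4)^Suc n"
    using a(2,3) bv by simp_all
  then show ?case unfolding Cov_def using mem by auto
qed

lemma Zset_negligible: "negligible Zset"
  unfolding negligible_outer_le
proof (intro allI impI)
  fix e :: real assume "e > 0"
  then obtain n where n: "(3/4::real)^n < e" using real_arch_pow_inv[of e "3/4"] by auto
  show "\<exists>T. Zset \<subseteq> T \<and> T \<in> lmeasurable \<and> measure lebesgue T \<le> e"
  proof (intro exI conjI)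
    show "Zset \<subseteq> Cov n" unfolding Zset_def using in_Cov by blast
    show "Cov n \<in> lmeasurable" by (rule Cov_lmeasurable)
    show "measure lebesgue (Cov n) \<le> e" using Cov_measure[of n] n by simp
  qed
qed

lemma Gval_Zset: "Gval c \<in> Zset"
  unfolding Zset_def Gval_def using gp_no00 by blast



lemma dig_measurable[measurable]: "(\<lambda>x. dig x n) \<in> measurable borel (count_space UNIV)"
proof -
  have "(\<lambda>x::real. \<lceil>2 ^ Suc n * x\<rceil>) \<in> measurable borel (count_space UNIV)"
    by (rule measurable_compose[OF _ measurable_real_ceiling]) simp
  then show ?thesis unfolding dig_def
    by (rule measurable_compose[OF _ measurable_count_space]) 
qed

fun qq :: "nat \<Rightarrow> real \<Rightarrow> nat" where
  "qq 0 x = (LEAST n. dig x n)"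
| "qq (Suc k) x = (LEAST n. qq k x < n \<and> dig x n)"

lemma qq_measurable[measurable]: "qq k \<in> measurable borel (count_space UNIV)"
proof (induction k)
  case 0
  have "(\<lambda>x. LEAST n. dig x n) \<in> measurable borel (count_space UNIV)" by measurable
  then show ?case by (simp add: fun_eq_iff[symmetric] cong: measurable_cong)
next
  case (Suc k)
  note [measurable] = Suc
  have "(\<lambda>x. LEAST n. qq k x < n \<and> dig x n) \<in> measurable borel (count_space UNIV)" by measurable
  moreover have "qq (Suc k) = (\<lambda>x. LEAST n. qq k x < n \<and> dig x n)" by (simp add: fun_eq_iff)
  ultimately show ?case by simp
qed

definition Rb :: "real \<Rightarrow> real" where
  "Rb x = bin_val (\<lambda>k. odd (qq k x))"

lemma Rb_measurable: "Rb \<in> borel_measurable borel"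
  unfolding Rb_def bin_val_def by measurable

lemma qq_enum: "0 < x \<Longrightarrow> x \<le> 1 \<Longrightarrow> qq k x = enumerate {n. dig x n} k"
proof (induction k)
  case 0 then show ?case by (simp add: enumerate_0)
next
  case (Suc k)
  then show ?case
    by (simp add: enumerate_Suc''[OF infinite_dig[OF Suc.prems]] conj_commute)
qed

lemma R_eq_Rb: "0 < x \<Longrightarrow> x \<le> 1 \<Longrightarrow> R x = Rb x"
  unfolding R_def Rb_def rho_def by (simp add: beta_dig qq_enum)

lemma R_measurable: "R \<in> borel_measurable (lebesgue_on {0..1})"
proof -
  have "(\<lambda>x. if x = 0 then 2/3 else Rb x) \<in> borel_measurable borel"
    using Rb_measurable by measurable
  then have m: "(\<lambda>x. if x = 0 then 2/3 else Rb x) \<in> borel_measurable (lebesgue_on {0..1})"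
    by (intro measurable_restrict_space1 measurable_completion) simp
  show ?thesis
  proof (rule measurable_cong[THEN iffD1, OF _ m])
    fix w assume "w \<in> space (lebesgue_on {0..1::real})"
    then have "0 \<le> w" "w \<le> 1" by auto
    then show "(if w = 0 then 2/3 else Rb w) = R w"
      using R_eq_Rb[of w] by (auto simp: R_def)
  qed
qed



definition rep :: "real \<Rightarrow> real" where
  "rep x = (SOME y. y \<in> {0..1} \<and> x - y \<in> \<rat>)"

definition Vit :: "real set" where "Vit = rep ` {0..1}"

lemma rep_props: "x \<in> {0..1} \<Longrightarrow> rep x \<in> {0..1} \<and> x - rep x \<in> \<rat>"
  unfolding rep_def by (rule someI[of _ x]) simp

lemma rep_eq: "x - x' \<in> \<rat> \<Longrightarrow> rep x = rep x'"
proof -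
  assume q: "x - x' \<in> \<rat>"
  have "(\<lambda>y. y \<in> {0..1} \<and> x - y \<in> \<rat>) = (\<lambda>y. y \<in> {0..1} \<and> x' - y \<in> \<rat>)"
  proof (rule ext, rule iffI)
    fix y assume "y \<in> {0..1} \<and> x - y \<in> \<rat>"
    moreover have "x' - y = (x - y) - (x - x')" by simp
    ultimately show "y \<in> {0..1} \<and> x' - y \<in> \<rat>" using q by (metis Rats_diff)
  next
    fix y assume "y \<in> {0..1} \<and> x' - y \<in> \<rat>"
    moreover have "x - y = (x' - y) + (x - x')" by simp
    ultimately show "y \<in> {0..1} \<and> x - y \<in> \<rat>" using q by (metis Rats_add)
  qed
  then show ?thesis unfolding rep_def by simp
qed

lemma Vit_sub: "Vit \<subseteq> {0..1}"
  unfolding Vit_def using rep_props by blast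

lemma Vit_diff: "u \<in> Vit \<Longrightarrow> v \<in> Vit \<Longrightarrow> u - v \<in> \<rat> \<Longrightarrow> u = v"
proof -
  assume "u \<in> Vit" "v \<in> Vit" and q: "u - v \<in> \<rat>"
  then obtain x x' where x: "x \<in> {0..1}" "u = rep x" and x': "x' \<in> {0..1}" "v = rep x'"
    unfolding Vit_def by blast
  have "x - rep x \<in> \<rat>" "x' - rep x' \<in> \<rat>" using rep_props x x' by auto
  moreover have "x - x' = (x - rep x) + (u - v) - (x' - rep x')" using x x' by simp
  ultimately have "x - x' \<in> \<rat>" using q by (metis Rats_add Rats_diff)
  then show "u = v" using x x' rep_eq by simp
qed

lemma Vit_not_measurable: "Vit \<notin> sets lebesgue"
proof
  assume meas: "Vit \<in> sets lebesgue"
  have lm: "Vit \<in> lmeasurable"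
    by (rule fmeasurableI2[OF _ Vit_sub meas]) (simp add: lmeasurable_cbox[of "0::real" 1, simplified])
  have I01: "measure lebesgue {0..1::real} = 1" by (subst measure_completion) auto
  show False
  proof (cases "measure lebesgue Vit = 0")
    case True
    then have negV: "negligible Vit" using lm negligible_iff_measure by blast
    let ?F = "(\<lambda>q. (+) q ` Vit) ` \<rat>"
    have "negligible (\<Union>?F)"
    proof (rule negligible_countable_Union)
      show "countable ?F" using countable_rat by blast
      fix T assume "T \<in> ?F"
      then obtain q where "T = (+) q ` Vit" by blast
      then show "negligible T" using negligible_translation[OF negV] by simp
    qed
    moreover have "{0..1} \<subseteq> \<Union>?F"
    proof
      fix x :: real assume x: "x \<in> {0..1}"
      then have "x - rep x \<in> \<rat>" "rep x \<in> Vit" using rep_props Vit_def by auto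
      moreover have "x = (x - rep x) + rep x" by simp
      ultimately show "x \<in> \<Union>?F" by blast
    qed
    ultimately have "negligible {0..1::real}" using negligible_subset by blast
    then show False using I01 negligible_imp_measure0[of "{0..1::real}"] by linarith
  next
    case False
    then have mpos: "measure lebesgue Vit > 0" using measure_nonneg[of lebesgue Vit] by linarith
    obtain N :: nat where N: "2 / measure lebesgue Vit < real N" using reals_Archimedean2 by blast
    then have N2: "2 < real N * measure lebesgue Vit" using mpos by (simp add: field_simps)
    let ?q = "\<lambda>j::nat. 1 / real (Suc j)"
    let ?T = "\<lambda>j. (+) (?q j) ` Vit"
    have q01: "0 \<le> ?q j" "?q j \<le> 1" for j by (simp_all add: field_simps)
    have "measure lebesgue (\<Union>j\<in>{..<N}. ?T j) = (\<Sum>j\<in>{..<N}. measure lebesgue (?T j))"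
    proof (rule measure_UNION')
      show "finite {..<N}" by simp
      show "?T j \<in> lmeasurable" for j using measurable_translation[OF lm] .
      show "pairwise (\<lambda>i j. disjnt (?T i) (?T j)) {..<N}"
      proof (rule pairwiseI)
        fix i j assume "i \<in> {..<N}" "j \<in> {..<N}" "i \<noteq> j"
        show "disjnt (?T i) (?T j)"
        unfolding disjnt_def proof (rule equals0I)
          fix z assume "z \<in> ?T i \<inter> ?T j"
          then obtain u v where u: "u \<in> Vit" "z = ?q i + u" and v: "v \<in> Vit" "z = ?q j + v" by blast
          have "u - v = ?q j - ?q i" using u v by simp
          moreover have "?q j - ?q i \<in> \<rat>" by simp
          ultimately have "u = v" using Vit_diff u v by simp
          then have "?q i = ?q j" using u v by simp
          then show False using \<open>i \<noteq> j\<close> by simp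
        qed
      qed
    qed
    also have "\<dots> = real N * measure lebesgue Vit" by (simp add: measure_translation)
    finally have eq: "measure lebesgue (\<Union>j\<in>{..<N}. ?T j) = real N * measure lebesgue Vit" .
    have sub: "(\<Union>j\<in>{..<N}. ?T j) \<subseteq> {0..2}"
    proof
      fix z assume "z \<in> (\<Union>j\<in>{..<N}. ?T j)"
      then obtain j u where "u \<in> Vit" "z = ?q j + u" by blast
      moreover have "0 \<le> u" "u \<le> 1" using Vit_sub \<open>u \<in> Vit\<close> by auto
      moreover note q01[of j]
      ultimately have "0 \<le> z" "z \<le> 2" by linarith+
      then show "z \<in> {0..2}" by simp
    qed
    have "measure lebesgue (\<Union>j\<in>{..<N}. ?T j) \<le> measure lebesgue {0..2::real}"
      by (rule measure_mono_fmeasurable[OF sub])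
        (auto intro!: fmeasurableD fmeasurable.finite_UN measurable_translation[OF lm])
    also have "\<dots> = 2" by (subst measure_completion) auto
    finally show False using eq N2 by simp
  qed
qed


theorem proposition5p1:
  shows "R \<in> borel_measurable (lebesgue_on {0..1})
    \<and> (\<forall>y\<in>{0..1}. {x \<in> {0..1}. R x = y} \<noteq> {}
         \<and> (\<exists>m \<in> {x \<in> {0..1}. R x = y}. \<forall>x \<in> {x \<in> {0..1}. R x = y}. x \<le> m)
         \<and> S y \<in> {x \<in> {0..1}. R x = y}
         \<and> (\<forall>x \<in> {x \<in> {0..1}. R x = y}. x \<le> S y))
    \<and> S ` {0..1} \<subseteq> {0..1} - normal2
    \<and> S ` {0..1} \<in> null_sets lebesgue
    \<and> (\<forall>y\<in>{0..1}. R (S y) = y)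
    \<and> (\<exists>E. E \<subseteq> {0..1} \<and> E \<in> null_sets lebesgue \<and> R ` E \<notin> sets lebesgue)"
proof -
  have SP: "\<exists>c. S y = Gval c \<and> S y \<in> {x \<in> {0..1}. R x = y} \<and> (\<forall>x \<in> {x \<in> {0..1}. R x = y}. x \<le> S y)"
    if "y \<in> {0..1}" for y using S_props that by auto
  have A: "\<forall>y\<in>{0..1}. {x \<in> {0..1}. R x = y} \<noteq> {}
         \<and> (\<exists>m \<in> {x \<in> {0..1}. R x = y}. \<forall>x \<in> {x \<in> {0..1}. R x = y}. x \<le> m)
         \<and> S y \<in> {x \<in> {0..1}. R x = y}
         \<and> (\<forall>x \<in> {x \<in> {0..1}. R x = y}. x \<le> S y)"
  proof
    fix y :: real assume "y \<in> {0..1}"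
    then obtain c where "S y = Gval c" "S y \<in> {x \<in> {0..1}. R x = y}" "\<forall>x \<in> {x \<in> {0..1}. R x = y}. x \<le> S y"
      using SP by blast
    then show "{x \<in> {0..1}. R x = y} \<noteq> {}
         \<and> (\<exists>m \<in> {x \<in> {0..1}. R x = y}. \<forall>x \<in> {x \<in> {0..1}. R x = y}. x \<le> m)
         \<and> S y \<in> {x \<in> {0..1}. R x = y}
         \<and> (\<forall>x \<in> {x \<in> {0..1}. R x = y}. x \<le> S y)" by blast
  qed
  have B: "S ` {0..1} \<subseteq> {0..1} - normal2"
  proof
    fix z assume "z \<in> S ` {0..1}"
    then obtain y where y: "y \<in> {0..1}" "z = S y" by blast
    then obtain c where "S y = Gval c" "S y \<in> {x \<in> {0..1}. R x = y}" using SP by blast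
    then show "z \<in> {0..1} - normal2" using Gval_not_normal[of c] y by simp
  qed
  have Zs: "S ` {0..1} \<subseteq> Zset"
  proof
    fix z assume "z \<in> S ` {0..1}"
    then obtain y where y: "y \<in> {0..1}" "z = S y" by blast
    then obtain c where "S y = Gval c" using SP by blast
    then show "z \<in> Zset" using Gval_Zset[of c] y by simp
  qed
  have C: "S ` {0..1} \<in> null_sets lebesgue"
    using negligible_subset[OF Zset_negligible Zs] negligible_iff_null_sets by blast
  have D: "\<forall>y\<in>{0..1}. R (S y) = y" using A by blast
  have E: "\<exists>E. E \<subseteq> {0..1} \<and> E \<in> null_sets lebesgue \<and> R ` E \<notin> sets lebesgue"
  proof (intro exI conjI)
    have sub: "S ` Vit \<subseteq> S ` {0..1}" using Vit_sub by blast
    show "S ` Vit \<subseteq> {0..1}" using sub B by blast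
    show "S ` Vit \<in> null_sets lebesgue"
      using negligible_subset[OF Zset_negligible] sub Zs negligible_iff_null_sets by blast
    have "R ` S ` Vit = Vit"
    proof -
      have "R ` S ` Vit = (\<lambda>y. R (S y)) ` Vit" by (simp add: image_image)
      also have "\<dots> = (\<lambda>y. y) ` Vit" using D Vit_sub by (intro image_cong) auto
      finally show ?thesis by simp
    qed
    then show "R ` S ` Vit \<notin> sets lebesgue" using Vit_not_measurable by simp
  qed
  show ?thesis using R_measurable A B C D E by blast
qed

end
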